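(* For every integer $k\ge2$, \[\mathsf P(k)=\mathsf I(k)\oplus\underline x\,\mathsf P(k-2)\,\underline x,\] where $\underline x\,\mathsf P(k-2)\,\underline x=\{\underline xP(\underline x)\underline x: P\in\mathsf P(k-2)\}$. Moreover, $\mathsf I(k)$ and $\underline x\,\mathsf P(k-2)\,\underline x$ are orthogonal with respect to $\langle\cdot,\cdot\rangle_k$; in fact $\mathsf I(k)$ is exactly the orthogonal complement of $\underline x\,\mathsf P(k-2)\,\underline x$ in $\mathsf P(k)$.
   Context: $\mathbb R_{0,m}$ is the $2^m$-dimensional real Clifford algebra generated by the orthonormal basis $e_1,\dots,e_m$ of $\mathbb R^m$ with relations $e_je_k+e_ke_j=-2\delta_{jk}$, with basis $e_A$ ($A\subseteq\{1,\dots,m\}$, $e_\emptyset=1$). For $a=\sum_Aa_Ae_A$, $[a]_0=a_\emptyset$ and the conjugation is $\overline a=\sum_Aa_A\overline{e_A}$, $\overline{e_A}=(-1)^{|A|(|A|+1)/2}e_A$. A point of $\mathbb R^m$ is identified with $\underline x=\sum_jx_je_j$. The Dirac operator $\partial_{\underline x}=\sum_je_j\partial_{x_j}$, and $\partial_{\underline x}f\partial_{\underline x}=\sum_{i,j}e_i(\partial_{x_i}\partial_{x_j}f)e_j$. $\mathsf P(k)$ is the real vector space of $\mathbb R_{0,m}$-valued homogeneous polynomials of degree $k$ on $\mathbb R^m$, and $\mathsf I(k)=\{P\in\mathsf P(k):\partial_{\underline x}P\partial_{\underline x}=0\}$ is the subspace of inframonogenic homogeneous polynomials of degree $k$. For $P_k=\sum_Ae_Ap_A(\underline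 x)$ with real homogeneous polynomials $p_A$, let $\overline{P_k(\partial_{\underline x})}=\sum_A\overline{e_A}\,p_A(\partial_{x_1},\dots,\partial_{x_m})$, and define the inner product $\langle P_k,Q_k\rangle_k=\big[\overline{P_k(\partial_{\underline x})}\,Q_k(\underline x)\big]_0$ on $\mathsf P(k)$. *)

theory Defs
  imports Complex_Main "HOL-Library.Function_Algebras"
begin

text \<open>An element of R_{0,m} is represented by its coefficient function
  A \<mapsto> a_A on finite index sets A (basis blades e_A, indices 0..m-1,
  i.e. e_1..e_m of the paper are e_0..e_{m-1} here).\<close>

type_synonym clif = "nat set \<Rightarrow> real"

definition cl_elem :: "nat \<Rightarrow> clif \<Rightarrow> bool" where
  "cl_elem m a \<longleftrightarrow> (\<forall>A. \<not> A \<subseteq> {..<m} \<longrightarrow> a A = 0)"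

definition cl_zero :: clif where
  "cl_zero = (\<lambda>_. 0)"

definition cl_basis :: "nat set \<Rightarrow> clif" where
  "cl_basis A = (\<lambda>B. if B = A then 1 else 0)"

definition cl_e :: "nat \<Rightarrow> clif" where
  "cl_e j = cl_basis {j}"

text \<open>Sign with e_A e_B = sign(A,B) e_{A \<triangle> B}, for e_A the ordered product
  of the e_j (j \<in> A increasing) and e_j e_k + e_k e_j = -2 \<delta>_{jk}.\<close>
definition cl_sign :: "nat set \<Rightarrow> nat set \<Rightarrow> real" where
  "cl_sign A B = (-1) ^ (card {(a, b). a \<in> A \<and> b \<in> B \<and> b < a} + card (A \<inter> B))"

definition cl_mult :: "nat \<Rightarrow> clif \<Rightarrow> clif \<Rightarrow> clif" where
  "cl_mult m a b = (\<lambda>C. \<Sum>A\<in>Pow {..<m}. \<Sum>B\<in>Pow {..<m}.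
      if (A - B) \<union> (B - A) = C then cl_sign A B * a A * b B else 0)"

definition cl_add :: "clif \<Rightarrow> clif \<Rightarrow> clif" where
  "cl_add a b = (\<lambda>A. a A + b A)"

definition cl_scale :: "real \<Rightarrow> clif \<Rightarrow> clif" where
  "cl_scale c a = (\<lambda>A. c * a A)"

definition cl_conj :: "clif \<Rightarrow> clif" where
  "cl_conj a = (\<lambda>A. (-1) ^ (card A * (card A + 1) div 2) * a A)"

definition cl_scalar :: "clif \<Rightarrow> real" where
  "cl_scalar a = a {}"

text \<open>A polynomial is represented by its coefficient function on monomials
  x^\<alpha> (\<alpha> a multi-index \<alpha> :: nat \<Rightarrow> nat), with Clifford coefficients.\<close>

type_synonym cpoly = "(nat \<Rightarrow> nat) \<Rightarrow> clif"

definition monomials :: "nat \<Rightarrow> nat \<Rightarrow> (nat \<Rightarrow> nat) set" where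
  "monomials m k = {\<alpha>. (\<forall>i\<ge>m. \<alpha> i = 0) \<and> (\<Sum>i<m. \<alpha> i) = k}"

definition pzero :: cpoly where
  "pzero = (\<lambda>_. cl_zero)"

definition padd :: "cpoly \<Rightarrow> cpoly \<Rightarrow> cpoly" where
  "padd P Q = (\<lambda>\<alpha>. cl_add (P \<alpha>) (Q \<alpha>))"

definition hom_poly :: "nat \<Rightarrow> nat \<Rightarrow> cpoly set" where
  "hom_poly m k = {P. (\<forall>\<alpha>. P \<alpha> \<noteq> cl_zero \<longrightarrow> \<alpha> \<in> monomials m k) \<and> (\<forall>\<alpha>. cl_elem m (P \<alpha>))}"

definition pder :: "nat \<Rightarrow> cpoly \<Rightarrow> cpoly" where
  "pder j P = (\<lambda>\<alpha>. cl_scale (real (\<alpha> j + 1)) (P (\<alpha>(j := \<alpha> j + 1))))"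

definition mulx :: "nat \<Rightarrow> cpoly \<Rightarrow> cpoly" where
  "mulx j P = (\<lambda>\<alpha>. if 0 < \<alpha> j then P (\<alpha>(j := \<alpha> j - 1)) else cl_zero)"

definition dpow :: "nat \<Rightarrow> (nat \<Rightarrow> nat) \<Rightarrow> cpoly \<Rightarrow> cpoly" where
  "dpow m \<alpha> P = foldr (\<lambda>j. pder j ^^ \<alpha> j) [0..<m] P"

definition dirac_sandwich :: "nat \<Rightarrow> cpoly \<Rightarrow> cpoly" where
  "dirac_sandwich m P = (\<lambda>\<alpha>. \<Sum>i<m. \<Sum>j<m.
      cl_mult m (cl_mult m (cl_e i) (pder i (pder j P) \<alpha>)) (cl_e j))"

definition x_sandwich :: "nat \<Rightarrow> cpoly \<Rightarrow> cpoly" where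
  "x_sandwich m P = (\<lambda>\<alpha>. \<Sum>i<m. \<Sum>j<m.
      cl_mult m (cl_mult m (cl_e i) (mulx i (mulx j P) \<alpha>)) (cl_e j))"

definition infra :: "nat \<Rightarrow> nat \<Rightarrow> cpoly set" where
  "infra m k = {P \<in> hom_poly m k. dirac_sandwich m P = pzero}"

definition xPx :: "nat \<Rightarrow> nat \<Rightarrow> cpoly set" where
  "xPx m k = x_sandwich m ` hom_poly m (k - 2)"

text \<open>Fischer inner product <P,Q>_k = [ conj(P(\<partial>)) Q(x) ]_0, where
  conj(P(\<partial>)) = \<Sum>_\<alpha> conj(P_\<alpha>) \<partial>^\<alpha>; for P, Q of degree k the result is
  a constant (the coefficient of the monomial x^0).\<close>
definition fischer :: "nat \<Rightarrow> nat \<Rightarrow> cpoly \<Rightarrow> cpoly \<Rightarrow> real" where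
  "fischer m k P Q = cl_scalar (\<Sum>\<alpha>\<in>monomials m k.
      cl_mult m (cl_conj (P \<alpha>)) (dpow m \<alpha> Q (\<lambda>_. 0)))"

end

theory Submission imports Defs begin

instantiation "fun" :: (type, real_vector) real_vector
begin
definition scaleR_fun :: "real \<Rightarrow> ('a \<Rightarrow> 'b) \<Rightarrow> 'a \<Rightarrow> 'b" where
  "scaleR_fun r f = (\<lambda>x. r *\<^sub>R f x)"
instance by standard (auto simp: scaleR_fun_def fun_eq_iff scaleR_add_right scaleR_add_left)
end

lemma scaleR_fun_apply[simp]: "(c *\<^sub>R f) x = c *\<^sub>R f x"
  by (simp add: scaleR_fun_def)

lemma sum_fun_apply: "(sum f I) x = sum (\<lambda>i. f i x) I"
  by (induct I rule: infinite_finite_induct) auto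

lemma cl_zero_eq: "cl_zero = 0" by (simp add: cl_zero_def fun_eq_iff)
lemma pzero_eq: "pzero = 0" by (simp add: pzero_def cl_zero_eq fun_eq_iff)
lemma padd_eq: "padd P Q = P + Q" by (simp add: padd_def cl_add_def fun_eq_iff)
lemma cl_scale_eq: "cl_scale c a = c *\<^sub>R a" by (simp add: cl_scale_def fun_eq_iff)

definition sd :: "nat set \<Rightarrow> nat set \<Rightarrow> nat set" where
  "sd A B = (A - B) \<union> (B - A)"

lemma sd_iff: "(sd A B = C) \<longleftrightarrow> (B = sd A C)"
  unfolding sd_def by blast

lemma sd_sd[simp]: "sd A (sd A B) = B" unfolding sd_def by blast
lemma sd_comm: "sd {i} (sd {j} D) = sd {j} (sd {i} D)" unfolding sd_def by blast

lemma sd_Pow: "i < m \<Longrightarrow> (sd {i} C \<in> Pow {..<m}) = (C \<in> Pow {..<m})"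
  unfolding sd_def by auto

definition lt :: "nat set \<Rightarrow> nat \<Rightarrow> nat" where "lt B i = card {b\<in>B. b < i}"
definition gt :: "nat set \<Rightarrow> nat \<Rightarrow> nat" where "gt B j = card {a\<in>B. j < a}"

lemma sign_left: "finite B \<Longrightarrow> cl_sign {i} B = (-1) ^ lt B i * (if i \<in> B then -1 else 1)"
proof -
  assume fB: "finite B"
  have "{(a, b). a \<in> {i} \<and> b \<in> B \<and> b < a} = Pair i ` {b\<in>B. b < i}" by auto
  hence c: "card {(a, b). a \<in> {i} \<and> b \<in> B \<and> b < a} = lt B i"
    by (simp add: card_image inj_on_def lt_def)
  have "card ({i} \<inter> B) = (if i \<in> B then 1 else 0)" by auto
  thus ?thesis unfolding cl_sign_def c by (simp add: power_add)
qed

lemma sign_right: "finite B \<Longrightarrow> cl_sign B {j} = (-1) ^ gt B j * (if j \<in> B then -1 else 1)"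
proof -
  assume fB: "finite B"
  have "{(a, b). a \<in> B \<and> b \<in> {j} \<and> b < a} = (\<lambda>a. (a,j)) ` {a\<in>B. j < a}" by auto
  hence c: "card {(a, b). a \<in> B \<and> b \<in> {j} \<and> b < a} = gt B j"
    by (simp add: card_image inj_on_def gt_def)
  have "card (B \<inter> {j}) = (if j \<in> B then 1 else 0)" by auto
  thus ?thesis unfolding cl_sign_def c by (simp add: power_add)
qed

lemma lt_toggle: assumes "finite D"
  shows "(-1::real) ^ lt (sd {j} D) i = (if j < i then -1 else 1) * (-1) ^ lt D i"
proof (cases "j < i")
  case False
  hence "{b \<in> sd {j} D. b < i} = {b\<in>D. b < i}" unfolding sd_def by auto
  thus ?thesis using False by (simp add: lt_def)
next
  case True
  show ?thesis
  proof (cases "j \<in> D")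
    case J: True
    hence e: "{b \<in> sd {j} D. b < i} = {b\<in>D. b < i} - {j}" unfolding sd_def by auto
    have "j \<in> {b\<in>D. b < i}" using J True by auto
    moreover have "finite {b\<in>D. b < i}" using assms by auto
    ultimately have "card {b\<in>D. b < i} = Suc (card ({b\<in>D. b < i} - {j}))"
      by (metis card_Suc_Diff1)
    thus ?thesis using True unfolding lt_def e by simp
  next
    case J: False
    hence e: "{b \<in> sd {j} D. b < i} = insert j {b\<in>D. b < i}" unfolding sd_def using True by auto
    have "finite {b\<in>D. b < i}" using assms by auto
    thus ?thesis using True J unfolding lt_def e by simp
  qed
qed

lemma gt_toggle: assumes "finite D"
  shows "(-1::real) ^ gt (sd {i} D) j = (if j < i then -1 else 1) * (-1) ^ gt D j"
proof (cases "j < i")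
  case False
  hence "{b \<in> sd {i} D. j < b} = {b\<in>D. j < b}" unfolding sd_def by auto
  thus ?thesis using False by (simp add: gt_def)
next
  case True
  show ?thesis
  proof (cases "i \<in> D")
    case J: True
    hence e: "{b \<in> sd {i} D. j < b} = {b\<in>D. j < b} - {i}" unfolding sd_def by auto
    have "i \<in> {b\<in>D. j < b}" using J True by auto
    moreover have "finite {b\<in>D. j < b}" using assms by auto
    ultimately have "card {b\<in>D. j < b} = Suc (card ({b\<in>D. j < b} - {i}))"
      by (metis card_Suc_Diff1)
    thus ?thesis using True unfolding gt_def e by simp
  next
    case J: False
    hence e: "{b \<in> sd {i} D. j < b} = insert i {b\<in>D. j < b}" unfolding sd_def using True by auto
    have "finite {b\<in>D. j < b}" using assms by auto
    thus ?thesis using True J unfolding gt_def e by simp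
  qed
qed

lemma lt_self: "lt (sd {i} D) i = lt D i"
  unfolding lt_def sd_def by (rule arg_cong[where f=card]) auto
lemma gt_self: "gt (sd {j} D) j = gt D j"
  unfolding gt_def sd_def by (rule arg_cong[where f=card]) auto

lemma sd_iff3: "((A - B) \<union> (B - A) = C) \<longleftrightarrow> (B = sd A C)"
  unfolding sd_def by blast

lemma sd_iff2: "((A - B) \<union> (B - A) = C) \<longleftrightarrow> (A = sd B C)"
  unfolding sd_def by blast

lemma mult_left:
  assumes "i < m"
  shows "cl_mult m (cl_e i) a C = (if C \<in> Pow {..<m} then cl_sign {i} (sd {i} C) * a (sd {i} C) else 0)"
proof -
  have h: "\<And>A. (\<Sum>B\<in>Pow {..<m}. if (A - B) \<union> (B - A) = C then cl_sign A B * cl_basis {i} A * a B else 0)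
     = (if A = {i} then (\<Sum>B\<in>Pow {..<m}. if B = sd {i} C then cl_sign {i} B * a B else 0) else 0)"
  proof -
    fix A show "?thesis A"
    proof (cases "A = {i}")
      case True
      show ?thesis unfolding True cl_basis_def
        by (simp only: if_P[OF refl] mult_1_right sd_iff3)
    next
      case False thus ?thesis unfolding cl_basis_def by (simp only: if_not_P[OF False] if_False mult_zero_right mult_zero_left sum.neutral_const if_cancel)
    qed
  qed
  have fP: "finite (Pow {..<m})" by simp
  have iP: "{i} \<in> Pow {..<m}" using assms by simp
  have "cl_mult m (cl_e i) a C = (\<Sum>A\<in>Pow {..<m}. \<Sum>B\<in>Pow {..<m}. if (A - B) \<union> (B - A) = C then cl_sign A B * cl_basis {i} A * a B else 0)"
    unfolding cl_mult_def cl_e_def by (rule refl)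
  also have "\<dots> = (\<Sum>A\<in>Pow {..<m}. (if A = {i} then (\<Sum>B\<in>Pow {..<m}. if B = sd {i} C then cl_sign {i} B * a B else 0) else 0))"
    by (rule sum.cong[OF refl], rule h)
  also have "\<dots> = (\<Sum>B\<in>Pow {..<m}. if B = sd {i} C then cl_sign {i} B * a B else 0)"
    by (simp only: sum.delta[OF fP] if_P[OF iP])
  also have "\<dots> = (if C \<in> Pow {..<m} then cl_sign {i} (sd {i} C) * a (sd {i} C) else 0)"
    by (simp only: sum.delta[OF fP] sd_Pow[OF assms])
  finally show ?thesis .
qed

lemma mult_right:
  assumes "j < m"
  shows "cl_mult m a (cl_e j) C = (if C \<in> Pow {..<m} then cl_sign (sd {j} C) {j} * a (sd {j} C) else 0)"
proof -
  have fP: "finite (Pow {..<m})" by simp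
  have jP: "{j} \<in> Pow {..<m}" using assms by simp
  have h: "\<And>A. (\<Sum>B\<in>Pow {..<m}. if (A - B) \<union> (B - A) = C then cl_sign A B * a A * cl_basis {j} B else 0)
     = (if A = sd {j} C then cl_sign A {j} * a A else 0)"
  proof -
    fix A
    have "(\<Sum>B\<in>Pow {..<m}. if (A - B) \<union> (B - A) = C then cl_sign A B * a A * cl_basis {j} B else 0)
      = (\<Sum>B\<in>Pow {..<m}. if B = {j} then (if A = sd {j} C then cl_sign A {j} * a A else 0) else 0)"
      by (rule sum.cong[OF refl]) (auto simp: cl_basis_def sd_iff2)
    also have "\<dots> = (if A = sd {j} C then cl_sign A {j} * a A else 0)"
      by (simp only: sum.delta[OF fP] if_P[OF jP])
    finally show "?thesis A" .
  qed
  have "cl_mult m a (cl_e j) C = (\<Sum>A\<in>Pow {..<m}. \<Sum>B\<in>Pow {..<m}. if (A - B) \<union> (B - A) = C then cl_sign A B * a A * cl_basis {j} B else 0)"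
    unfolding cl_mult_def cl_e_def by (rule refl)
  also have "\<dots> = (\<Sum>A\<in>Pow {..<m}. (if A = sd {j} C then cl_sign A {j} * a A else 0))"
    by (rule sum.cong[OF refl], rule h)
  also have "\<dots> = (if C \<in> Pow {..<m} then cl_sign (sd {j} C) {j} * a (sd {j} C) else 0)"
    by (simp only: sum.delta[OF fP] sd_Pow[OF assms])
  finally show ?thesis .
qed

lemma cl_mult_elem: "cl_elem m (cl_mult m a b)"
  unfolding cl_elem_def
proof (intro allI impI)
  fix C assume C: "\<not> C \<subseteq> {..<m}"
  have "\<And>A B. A \<in> Pow {..<m} \<Longrightarrow> B \<in> Pow {..<m} \<Longrightarrow> (A - B) \<union> (B - A) \<noteq> C"
    using C by blast
  thus "cl_mult m a b C = 0" unfolding cl_mult_def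
    by (intro sum.neutral ballI) simp
qed

definition tau :: "nat \<Rightarrow> clif \<Rightarrow> clif \<Rightarrow> real" where
  "tau m x y = (\<Sum>A\<in>Pow {..<m}. x A * y A)"

lemma finite_Pow_sub: "(D::nat set) \<in> Pow {..<(m::nat)} \<Longrightarrow> finite D"
  using finite_subset[of D "{..<m}"] by auto

lemma fin_sd: "finite D \<Longrightarrow> finite (sd {i} D)"
  unfolding sd_def by simp

lemma sum_sd_reindex:
  assumes "i < m"
  shows "(\<Sum>C\<in>Pow {..<m}. f C) = (\<Sum>D\<in>Pow {..<m}. f (sd {i} D))"
proof -
  have img: "sd {i} ` Pow {..<m} = Pow {..<m}"
  proof
    show "sd {i} ` Pow {..<m} \<subseteq> Pow {..<m}" using sd_Pow[OF assms] by blast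
    show "Pow {..<m} \<subseteq> sd {i} ` Pow {..<m}"
    proof
      fix C assume "C \<in> Pow {..<m}"
      hence "sd {i} C \<in> Pow {..<m}" using sd_Pow[OF assms] by blast
      thus "C \<in> sd {i} ` Pow {..<m}" using sd_sd[of "{i}" C] by (metis image_eqI)
    qed
  qed
  have inj: "inj_on (sd {i}) (Pow {..<m})" by (metis inj_onI sd_sd)
  show ?thesis using sum.reindex[OF inj, of f] unfolding img by (simp add: comp_def)
qed

lemma tau_left:
  assumes "i < m"
  shows "tau m (cl_mult m (cl_e i) x) y = - tau m x (cl_mult m (cl_e i) y)"
proof -
  have "tau m (cl_mult m (cl_e i) x) y = (\<Sum>C\<in>Pow {..<m}. cl_sign {i} (sd {i} C) * x (sd {i} C) * y C)"
    unfolding tau_def by (rule sum.cong[OF refl]) (simp add: mult_left[OF assms] del: Pow_iff)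
  also have "\<dots> = (\<Sum>D\<in>Pow {..<m}. cl_sign {i} D * x D * y (sd {i} D))"
    by (subst sum_sd_reindex[OF assms]) (simp only: sd_sd)
  also have "\<dots> = (\<Sum>D\<in>Pow {..<m}. - (x D * (cl_sign {i} (sd {i} D) * y (sd {i} D))))"
  proof (rule sum.cong)
    fix D assume D: "D \<in> Pow {..<m}"
    have f0: "finite D" using finite_Pow_sub[OF D] .
    have f: "finite D" "finite (sd {i} D)" using f0 fin_sd[OF f0] by auto
    have "i \<in> sd {i} D \<longleftrightarrow> i \<notin> D" unfolding sd_def by auto
    thus "cl_sign {i} D * x D * y (sd {i} D) = - (x D * (cl_sign {i} (sd {i} D) * y (sd {i} D)))"
      using f by (simp add: sign_left lt_self)
  qed simp
  also have "\<dots> = - tau m x (cl_mult m (cl_e i) y)"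
    unfolding tau_def sum_negf[symmetric] by (rule sum.cong[OF refl]) (simp add: mult_left[OF assms] sd_Pow[OF assms] del: Pow_iff)
  finally show ?thesis .
qed

lemma tau_right:
  assumes "j < m"
  shows "tau m (cl_mult m x (cl_e j)) y = - tau m x (cl_mult m y (cl_e j))"
proof -
  have "tau m (cl_mult m x (cl_e j)) y = (\<Sum>C\<in>Pow {..<m}. cl_sign (sd {j} C) {j} * x (sd {j} C) * y C)"
    unfolding tau_def by (rule sum.cong[OF refl]) (simp add: mult_right[OF assms] del: Pow_iff)
  also have "\<dots> = (\<Sum>D\<in>Pow {..<m}. cl_sign D {j} * x D * y (sd {j} D))"
    by (subst sum_sd_reindex[OF assms]) (simp only: sd_sd)
  also have "\<dots> = (\<Sum>D\<in>Pow {..<m}. - (x D * (cl_sign (sd {j} D) {j} * y (sd {j} D))))"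
  proof (rule sum.cong)
    fix D assume D: "D \<in> Pow {..<m}"
    have f0: "finite D" using finite_Pow_sub[OF D] .
    have f: "finite D" "finite (sd {j} D)" using f0 fin_sd[OF f0] by auto
    have "j \<in> sd {j} D \<longleftrightarrow> j \<notin> D" unfolding sd_def by auto
    thus "cl_sign D {j} * x D * y (sd {j} D) = - (x D * (cl_sign (sd {j} D) {j} * y (sd {j} D)))"
      using f by (simp add: sign_right gt_self)
  qed simp
  also have "\<dots> = - tau m x (cl_mult m y (cl_e j))"
    unfolding tau_def sum_negf[symmetric] by (rule sum.cong[OF refl]) (simp add: mult_right[OF assms] sd_Pow[OF assms] del: Pow_iff)
  finally show ?thesis .
qed

lemma mult_assoc_e:
  assumes "i < m" "j < m"
  shows "cl_mult m (cl_e i) (cl_mult m y (cl_e j)) D = cl_mult m (cl_mult m (cl_e i) y) (cl_e j) D"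
proof (cases "D \<in> Pow {..<m}")
  case False thus ?thesis using assms by (simp add: mult_left mult_right del: Pow_iff)
next
  case True
  have P1: "sd {i} D \<in> Pow {..<m}" "sd {j} D \<in> Pow {..<m}" using sd_Pow[OF assms(1)] sd_Pow[OF assms(2)] True by auto
  have f0: "finite D" using finite_Pow_sub[OF True] .
  have f: "finite D" "finite (sd {i} D)" "finite (sd {j} D)" "finite (sd {j} (sd {i} D))" "finite (sd {i} (sd {j} D))"
    using f0 fin_sd by auto
  have m1: "i \<in> sd {i} D \<longleftrightarrow> i \<notin> D" "j \<in> sd {j} D \<longleftrightarrow> j \<notin> D" unfolding sd_def by auto
  have m2: "j \<in> sd {j} (sd {i} D) \<longleftrightarrow> (j \<notin> D \<longleftrightarrow> i \<noteq> j)" "i \<in> sd {i} (sd {j} D) \<longleftrightarrow> (i \<notin> D \<longleftrightarrow> i \<noteq> j)"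
    unfolding sd_def by auto
  have "cl_mult m (cl_e i) (cl_mult m y (cl_e j)) D =
     cl_sign {i} (sd {i} D) * (cl_sign (sd {j} (sd {i} D)) {j} * y (sd {j} (sd {i} D)))"
    using True P1 assms by (simp add: mult_left mult_right del: Pow_iff)
  also have "\<dots> = cl_sign (sd {j} D) {j} * (cl_sign {i} (sd {i} (sd {j} D)) * y (sd {i} (sd {j} D)))"
    using f m1 m2 by (simp add: sign_left sign_right lt_self gt_self lt_toggle gt_toggle sd_comm[of j i])
  also have "\<dots> = cl_mult m (cl_mult m (cl_e i) y) (cl_e j) D"
    using True P1 assms by (simp add: mult_left mult_right del: Pow_iff)
  finally show ?thesis .
qed

lemma cl_mult_alt: "cl_mult m a b C = (\<Sum>A\<in>Pow {..<m}. \<Sum>B\<in>Pow {..<m}.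
   a A * (b B * (if (A - B) \<union> (B - A) = C then cl_sign A B else 0)))"
  unfolding cl_mult_def by (intro sum.cong refl) simp

lemma cl_mult_add_left: "cl_mult m (a + b) c = cl_mult m a c + cl_mult m b c"
  unfolding fun_eq_iff cl_mult_alt plus_fun_apply
  by (simp add: distrib_right sum.distrib)

lemma cl_mult_add_right: "cl_mult m c (a + b) = cl_mult m c a + cl_mult m c b"
  unfolding fun_eq_iff cl_mult_alt plus_fun_apply
  by (simp add: distrib_right distrib_left sum.distrib)

lemma cl_mult_scale_left: "cl_mult m (r *\<^sub>R a) c = r *\<^sub>R cl_mult m a c"
  unfolding fun_eq_iff cl_mult_alt scaleR_fun_apply
  by (simp add: sum_distrib_left mult.assoc)

lemma cl_mult_scale_right: "cl_mult m c (r *\<^sub>R a) = r *\<^sub>R cl_mult m c a"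
  unfolding fun_eq_iff cl_mult_alt scaleR_fun_apply
  by (simp add: sum_distrib_left mult.assoc mult.left_commute)

lemma cl_mult_zero_left: "cl_mult m 0 c = 0"
  unfolding fun_eq_iff cl_mult_alt by simp

lemma cl_mult_zero_right: "cl_mult m c 0 = 0"
  unfolding fun_eq_iff cl_mult_alt by simp

definition Lm :: "nat \<Rightarrow> nat \<Rightarrow> nat \<Rightarrow> clif \<Rightarrow> clif" where
  "Lm m i j x = cl_mult m (cl_mult m (cl_e i) x) (cl_e j)"

lemma Lm_add: "Lm m i j (x + y) = Lm m i j x + Lm m i j y"
  unfolding Lm_def by (simp add: cl_mult_add_left cl_mult_add_right)
lemma Lm_scale: "Lm m i j (r *\<^sub>R x) = r *\<^sub>R Lm m i j x"
  unfolding Lm_def by (simp add: cl_mult_scale_left cl_mult_scale_right)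
lemma Lm_zero: "Lm m i j 0 = 0"
  unfolding Lm_def by (simp add: cl_mult_zero_left cl_mult_zero_right)
lemma Lm_elem: "cl_elem m (Lm m i j x)"
  unfolding Lm_def by (rule cl_mult_elem)

lemma tau_Lm:
  assumes "i < m" "j < m"
  shows "tau m (Lm m i j x) y = tau m x (Lm m i j y)"
proof -
  have "tau m (Lm m i j x) y = - tau m (cl_mult m (cl_e i) x) (cl_mult m y (cl_e j))"
    unfolding Lm_def by (rule tau_right[OF assms(2)])
  also have "\<dots> = tau m x (cl_mult m (cl_e i) (cl_mult m y (cl_e j)))"
    by (simp add: tau_left[OF assms(1)])
  also have "\<dots> = tau m x (Lm m i j y)"
    unfolding tau_def Lm_def by (rule sum.cong[OF refl]) (simp add: mult_assoc_e[OF assms])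
  finally show ?thesis .
qed

lemma tau_sum_left: "tau m (\<Sum>i\<in>I. f i) y = (\<Sum>i\<in>I. tau m (f i) y)"
  unfolding tau_def sum_fun_apply sum_distrib_right by (rule sum.swap)

lemma tau_sum_right: "tau m y (\<Sum>i\<in>I. f i) = (\<Sum>i\<in>I. tau m y (f i))"
  unfolding tau_def sum_fun_apply sum_distrib_left by (rule sum.swap)

lemma tau_add_left: "tau m (x + z) y = tau m x y + tau m z y"
  unfolding tau_def by (simp add: distrib_right sum.distrib)
lemma tau_add_right: "tau m y (x + z) = tau m y x + tau m y z"
  unfolding tau_def by (simp add: distrib_left sum.distrib)
lemma tau_scale_left: "tau m (r *\<^sub>R x) y = r * tau m x y"
  unfolding tau_def by (simp add: sum_distrib_left mult.assoc)
lemma tau_scale_right: "tau m y (r *\<^sub>R x) = r * tau m y x"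
  unfolding tau_def by (simp add: sum_distrib_left mult.left_commute)
lemma tau_sym: "tau m x y = tau m y x"
  unfolding tau_def by (simp add: mult.commute)
lemma tau_zero_left: "tau m 0 y = 0" unfolding tau_def by simp
lemma tau_zero_right: "tau m y 0 = 0" unfolding tau_def by simp

lemma card_pairs:
  fixes A :: "nat set"
  assumes "finite A"
  shows "2 * card {(a, b). a \<in> A \<and> b \<in> A \<and> b < a} + card A = card A * card A"
proof -
  define P1 where "P1 = {(a, b). a \<in> A \<and> b \<in> A \<and> b < a}"
  define P2 where "P2 = {(a, b). a \<in> A \<and> b \<in> A \<and> a < b}"
  define Dg where "Dg = (\<lambda>a. (a, a)) ` A"
  have AA: "A \<times> A = P1 \<union> P2 \<union> Dg" unfolding P1_def P2_def Dg_def by auto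
  have fAA: "finite (A \<times> A)" using assms by simp
  have fin: "finite P1" "finite P2" "finite Dg"
    using fAA unfolding AA by simp_all
  have d1: "P1 \<inter> P2 = {}" "(P1 \<union> P2) \<inter> Dg = {}" unfolding P1_def P2_def Dg_def by auto
  have "P2 = (\<lambda>(a, b). (b, a)) ` P1" unfolding P1_def P2_def by auto
  moreover have "inj_on (\<lambda>(a, b). (b, a)) P1" by (auto simp: inj_on_def)
  ultimately have c2: "card P2 = card P1" by (simp add: card_image)
  have cD: "card Dg = card A" unfolding Dg_def by (simp add: card_image inj_on_def)
  have "card (A \<times> A) = card P1 + card P2 + card Dg"
    unfolding AA using fin d1 by (simp add: card_Un_disjoint)
  thus ?thesis using c2 cD unfolding P1_def[symmetric] by (simp add: card_cartesian_product)
qed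

lemma sign_conj: 
  assumes "finite A"
  shows "cl_sign A A * (-1) ^ (card A * (card A + 1) div 2) = (1::real)"
proof -
  define n where "n = card A"
  define cp where "cp = card {(a, b). a \<in> A \<and> b \<in> A \<and> b < a}"
  define t where "t = n * (n + 1) div 2"
  have h1: "2 * cp + n = n * n" using card_pairs[OF assms] unfolding cp_def n_def .
  have h2: "2 * t = n * n + n" unfolding t_def by (simp add: algebra_simps)
  have e: "cp + n + t = n * n + n" using h1 h2 by linarith
  have ev: "even (cp + n + t)" unfolding e by simp
  have "cl_sign A A * (-1) ^ t = (-1::real) ^ (cp + n + t)"
    unfolding cl_sign_def cp_def n_def by (simp add: power_add)
  also have "\<dots> = 1" using ev by simp
  finally show ?thesis unfolding t_def n_def .
qed

lemma symdiff_empty: "((A - B) \<union> (B - A) = {}) = (B = A)" by blast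

lemma scalar_conj: "cl_scalar (cl_mult m (cl_conj a) b) = tau m a b"
proof -
  have fP: "finite (Pow {..<m})" by simp
  have "cl_scalar (cl_mult m (cl_conj a) b) =
    (\<Sum>A\<in>Pow {..<m}. \<Sum>B\<in>Pow {..<m}. if B = A then cl_sign A B * cl_conj a A * b B else 0)"
    unfolding cl_scalar_def cl_mult_def
    by (intro sum.cong refl) (simp only: symdiff_empty)
  also have "\<dots> = (\<Sum>A\<in>Pow {..<m}. cl_sign A A * cl_conj a A * b A)"
    by (intro sum.cong refl) (simp add: sum.delta[OF fP] del: Pow_iff)
  also have "\<dots> = tau m a b"
    unfolding tau_def
  proof (intro sum.cong refl)
    fix A assume "A \<in> Pow {..<m}"
    hence f: "finite A" by (rule finite_Pow_sub)
    show "cl_sign A A * cl_conj a A * b A = a A * b A"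
      using sign_conj[OF f] unfolding cl_conj_def
      by (metis (no_types, lifting) mult.assoc mult.left_commute mult_1_right)
  qed
  finally show ?thesis .
qed

section \<open>Polynomials\<close>

lemma finite_monomials: "finite (monomials m k)"
proof -
  let ?L = "{xs. set xs \<subseteq> {..k} \<and> length xs = m}"
  have "monomials m k \<subseteq> (\<lambda>xs i. if i < m then xs ! i else 0) ` ?L"
  proof
    fix \<alpha> assume a: "\<alpha> \<in> monomials m k"
    hence z: "\<forall>i\<ge>m. \<alpha> i = 0" and s: "(\<Sum>i<m. \<alpha> i) = k" unfolding monomials_def by auto
    have le: "\<And>i. i < m \<Longrightarrow> \<alpha> i \<le> k"
      using s member_le_sum[of _ "{..<m}" \<alpha>] by fastforce
    have "map \<alpha> [0..<m] \<in> ?L" using le by auto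
    moreover have "\<alpha> = (\<lambda>i. if i < m then map \<alpha> [0..<m] ! i else 0)"
      using z by (auto simp: fun_eq_iff)
    ultimately show "\<alpha> \<in> (\<lambda>xs i. if i < m then xs ! i else 0) ` ?L" by blast
  qed
  moreover have "finite ?L" by (rule finite_lists_length_eq) simp
  ultimately show ?thesis by (meson finite_imageI finite_subset)
qed

definition mf :: "nat \<Rightarrow> (nat \<Rightarrow> nat) \<Rightarrow> real" where
  "mf m \<alpha> = (\<Prod>i<m. fact (\<alpha> i))"

lemma mf_pos: "mf m \<alpha> > 0"
  unfolding mf_def by (rule prod_pos) simp

lemma mf_upd:
  assumes "p < m"
  shows "mf m (\<alpha>(p := Suc (\<alpha> p))) = real (Suc (\<alpha> p)) * mf m \<alpha>"
proof -
  have fm: "finite {..<m}" "p \<in> {..<m}" using assms by auto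
  have A: "mf m (\<alpha>(p := Suc (\<alpha> p))) = fact (Suc (\<alpha> p)) * (\<Prod>i\<in>{..<m} - {p}. fact ((\<alpha>(p := Suc (\<alpha> p))) i))"
    unfolding mf_def by (subst prod.remove[OF fm]) (simp only: fun_upd_same)
  have B: "(\<Prod>i\<in>{..<m} - {p}. fact ((\<alpha>(p := Suc (\<alpha> p))) i)) = (\<Prod>i\<in>{..<m} - {p}. (fact (\<alpha> i) :: real))"
    by (rule prod.cong) auto
  have C: "mf m \<alpha> = fact (\<alpha> p) * (\<Prod>i\<in>{..<m} - {p}. (fact (\<alpha> i) :: real))"
    unfolding mf_def by (subst prod.remove[OF fm]) (rule refl)
  have D: "(fact (Suc (\<alpha> p)) :: real) = real (Suc (\<alpha> p)) * fact (\<alpha> p)"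
    by (rule fact_Suc)
  show ?thesis unfolding A B C D by (simp only: mult.assoc)
qed

lemma sum_upd:
  fixes \<beta> :: "nat \<Rightarrow> nat"
  assumes "p < m"
  shows "(\<Sum>i<m. (\<beta>(p := v)) i) = v + (\<Sum>i\<in>{..<m} - {p}. \<beta> i)"
    and "(\<Sum>i<m. \<beta> i) = \<beta> p + (\<Sum>i\<in>{..<m} - {p}. \<beta> i)"
proof -
  have fm: "finite {..<m}" "p \<in> {..<m}" using assms by auto
  show "(\<Sum>i<m. (\<beta>(p := v)) i) = v + (\<Sum>i\<in>{..<m} - {p}. \<beta> i)"
    by (subst sum.remove[OF fm]) (auto intro!: sum.cong)
  show "(\<Sum>i<m. \<beta> i) = \<beta> p + (\<Sum>i\<in>{..<m} - {p}. \<beta> i)"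
    by (subst sum.remove[OF fm]) simp
qed

lemma mon_up:
  assumes "p < m" "\<beta> \<in> monomials m k"
  shows "\<beta>(p := \<beta> p + 1) \<in> monomials m (Suc k)"
  using assms sum_upd[OF assms(1), of \<beta>] unfolding monomials_def by auto

lemma mon_down:
  assumes "p < m" "\<beta>(p := \<beta> p + 1) \<in> monomials m (Suc k)"
  shows "\<beta> \<in> monomials m k"
proof -
  have z: "\<forall>i\<ge>m. \<beta> i = 0"
  proof (intro allI impI)
    fix i assume "m \<le> i"
    hence "i \<noteq> p" using assms by auto
    thus "\<beta> i = 0" using assms(2) \<open>m \<le> i\<close> unfolding monomials_def
      by (metis (mono_tags, lifting) fun_upd_other mem_Collect_eq)
  qed
  have "(\<Sum>i<m. (\<beta>(p := \<beta> p + 1)) i) = Suc k" using assms(2) unfolding monomials_def by auto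
  hence "(\<Sum>i<m. \<beta> i) = k" using sum_upd[OF assms(1), of \<beta>] by simp
  thus ?thesis using z unfolding monomials_def by auto
qed

lemma pder_pow:
  "(pder p ^^ t) Q \<beta> = (\<Prod>s<t. real (\<beta> p + s + 1)) *\<^sub>R Q (\<beta>(p := \<beta> p + t))"
proof (induction t arbitrary: \<beta>)
  case 0 thus ?case by simp
next
  case (Suc t)
  have "(pder p ^^ Suc t) Q \<beta> = real (\<beta> p + 1) *\<^sub>R ((pder p ^^ t) Q) (\<beta>(p := \<beta> p + 1))"
    by (simp add: pder_def cl_scale_eq)
  also have "\<dots> = (real (\<beta> p + 1) * (\<Prod>s<t. real (\<beta> p + Suc s + 1))) *\<^sub>R Q (\<beta>(p := \<beta> p + Suc t))"
    unfolding Suc.IH by (simp add: algebra_simps)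
  also have "real (\<beta> p + 1) * (\<Prod>s<t. real (\<beta> p + Suc s + 1)) = (\<Prod>s<Suc t. real (\<beta> p + s + 1))"
    by (subst prod.lessThan_Suc_shift) simp
  finally show ?case .
qed

lemma foldr_pder:
  "foldr (\<lambda>j. pder j ^^ \<alpha> j) [0..<n] Q \<beta> =
     (\<Prod>j<n. \<Prod>s<\<alpha> j. real (\<beta> j + s + 1)) *\<^sub>R Q (\<lambda>i. if i < n then \<beta> i + \<alpha> i else \<beta> i)"
proof (induction n arbitrary: Q)
  case 0 thus ?case by simp
next
  case (Suc n)
  let ?b = "\<lambda>i. if i < n then \<beta> i + \<alpha> i else \<beta> i"
  have "foldr (\<lambda>j. pder j ^^ \<alpha> j) [0..<Suc n] Q \<beta> = foldr (\<lambda>j. pder j ^^ \<alpha> j) [0..<n] ((pder n ^^ \<alpha> n) Q) \<beta>"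
    by simp
  also have "\<dots> = (\<Prod>j<n. \<Prod>s<\<alpha> j. real (\<beta> j + s + 1)) *\<^sub>R ((pder n ^^ \<alpha> n) Q) ?b"
    by (rule Suc.IH)
  also have "((pder n ^^ \<alpha> n) Q) ?b = (\<Prod>s<\<alpha> n. real (\<beta> n + s + 1)) *\<^sub>R Q (?b(n := ?b n + \<alpha> n))"
    by (simp add: pder_pow)
  also have "?b(n := ?b n + \<alpha> n) = (\<lambda>i. if i < Suc n then \<beta> i + \<alpha> i else \<beta> i)"
    by (auto simp: fun_eq_iff)
  finally show ?case by (simp add: mult_ac)
qed

lemma prod_fact: "(\<Prod>s<t. real (0 + s + 1)) = fact t"
  by (induction t) (simp_all add: fact_Suc)

lemma dpow_zero:
  assumes "\<alpha> \<in> monomials m k"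
  shows "dpow m \<alpha> Q (\<lambda>_. 0) = mf m \<alpha> *\<^sub>R Q \<alpha>"
proof -
  have "(\<lambda>i. if i < m then 0 + \<alpha> i else 0) = \<alpha>"
    using assms unfolding monomials_def by (auto simp: fun_eq_iff)
  thus ?thesis unfolding dpow_def foldr_pder mf_def prod_fact by simp
qed

definition ip :: "nat \<Rightarrow> nat \<Rightarrow> cpoly \<Rightarrow> cpoly \<Rightarrow> real" where
  "ip m k P Q = (\<Sum>\<alpha>\<in>monomials m k. mf m \<alpha> * tau m (P \<alpha>) (Q \<alpha>))"

lemma fischer_ip: "fischer m k P Q = ip m k P Q"
proof -
  have "fischer m k P Q = (\<Sum>\<alpha>\<in>monomials m k. cl_scalar (cl_mult m (cl_conj (P \<alpha>)) (dpow m \<alpha> Q (\<lambda>_. 0))))"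
    unfolding fischer_def cl_scalar_def sum_fun_apply ..
  also have "\<dots> = ip m k P Q" unfolding ip_def
    by (rule sum.cong[OF refl]) (simp add: scalar_conj dpow_zero tau_scale_right)
  finally show ?thesis .
qed

lemma ip_add_left: "ip m k (P + P') Q = ip m k P Q + ip m k P' Q"
  unfolding ip_def by (simp add: tau_add_left distrib_left sum.distrib)
lemma ip_scale_left: "ip m k (c *\<^sub>R P) Q = c * ip m k P Q"
  unfolding ip_def by (simp add: tau_scale_left sum_distrib_left mult.left_commute)
lemma ip_sym: "ip m k P Q = ip m k Q P"
  unfolding ip_def by (simp add: tau_sym)
lemma ip_sum_left: "ip m k (\<lambda>\<alpha>. \<Sum>i\<in>I. f i \<alpha>) Q = (\<Sum>i\<in>I. ip m k (f i) Q)"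
  unfolding ip_def tau_sum_left sum_distrib_left by (rule sum.swap)
lemma ip_sum_right: "ip m k Q (\<lambda>\<alpha>. \<Sum>i\<in>I. f i \<alpha>) = (\<Sum>i\<in>I. ip m k Q (f i))"
  unfolding ip_def tau_sum_right sum_distrib_left by (rule sum.swap)
lemma ip_zero_right: "ip m k Q 0 = 0"
  unfolding ip_def by (simp add: tau_zero_right)

lemma ip_Lm:
  assumes "i < m" "j < m"
  shows "ip m k (\<lambda>\<alpha>. Lm m i j (X \<alpha>)) Q = ip m k X (\<lambda>\<alpha>. Lm m i j (Q \<alpha>))"
  unfolding ip_def by (simp add: tau_Lm[OF assms])

lemma ip_mulx:
  assumes "p < m"
  shows "ip m (Suc k) (mulx p R) Q = ip m k R (pder p Q)"
proof -
  have "ip m k R (pder p Q) = ip m (Suc k) (mulx p R) Q"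
    unfolding ip_def
  proof (rule sum.reindex_bij_witness_not_neutral[where S'="{}" and T'="{\<alpha>\<in>monomials m (Suc k). \<alpha> p = 0}"
        and j="\<lambda>\<beta>. \<beta>(p := \<beta> p + 1)" and i="\<lambda>\<alpha>. \<alpha>(p := \<alpha> p - 1)"])
    show "finite {}" by simp
    show "finite {\<alpha>\<in>monomials m (Suc k). \<alpha> p = 0}" using finite_monomials by simp
    fix a assume a: "a \<in> monomials m k - {}"
    show "(a(p := a p + 1))(p := (a(p := a p + 1)) p - 1) = a" by simp
    show "a(p := a p + 1) \<in> monomials m (Suc k) - {\<alpha> \<in> monomials m (Suc k). \<alpha> p = 0}"
      using mon_up[OF assms] a by simp
  next
    fix b assume b: "b \<in> monomials m (Suc k) - {\<alpha> \<in> monomials m (Suc k). \<alpha> p = 0}"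
    hence bp: "b p > 0" by auto
    have eq: "(b(p := b p - 1))(p := (b(p := b p - 1)) p + 1) = b" using bp by (simp add: fun_eq_iff)
    show "(b(p := b p - 1))(p := (b(p := b p - 1)) p + 1) = b" by (rule eq)
    show "b(p := b p - 1) \<in> monomials m k - {}"
      using mon_down[OF assms, of "b(p := b p - 1)" k] eq b by simp
  next
    fix a assume "a \<in> ({}::(nat\<Rightarrow>nat) set)" thus "mf m a * tau m (R a) (pder p Q a) = 0" by simp
  next
    fix b assume "b \<in> {\<alpha> \<in> monomials m (Suc k). \<alpha> p = 0}"
    thus "mf m b * tau m (mulx p R b) (Q b) = 0" by (simp add: mulx_def cl_zero_eq tau_zero_left)
  next
    fix a assume a: "a \<in> monomials m k"
    show "mf m (a(p := a p + 1)) * tau m (mulx p R (a(p := a p + 1))) (Q (a(p := a p + 1))) =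
          mf m a * tau m (R a) (pder p Q a)"
      by (simp add: mulx_def pder_def cl_scale_eq tau_scale_right mf_upd[OF assms])
  qed
  thus ?thesis by simp
qed

lemma pder_comm: "pder i (pder j Q) = pder j (pder i Q)"
  by (cases "i = j") (auto simp: pder_def cl_scale_eq fun_eq_iff fun_upd_twist)

lemma pder_Lm: "pder p (\<lambda>\<alpha>. Lm m i j (Q \<alpha>)) = (\<lambda>\<alpha>. Lm m i j (pder p Q \<alpha>))"
  by (simp add: pder_def cl_scale_eq Lm_scale fun_eq_iff)

lemma xs_alt: "x_sandwich m R = (\<lambda>\<alpha>. \<Sum>i<m. \<Sum>j<m. Lm m i j (mulx i (mulx j R) \<alpha>))"
  unfolding x_sandwich_def Lm_def ..
lemma ds_alt: "dirac_sandwich m R = (\<lambda>\<alpha>. \<Sum>i<m. \<Sum>j<m. Lm m i j (pder i (pder j R) \<alpha>))"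
  unfolding dirac_sandwich_def Lm_def ..

lemma ip_adjoint: "ip m (Suc (Suc k)) (x_sandwich m R) Q = ip m k R (dirac_sandwich m Q)"
proof -
  have "ip m (Suc (Suc k)) (x_sandwich m R) Q =
     (\<Sum>i<m. \<Sum>j<m. ip m (Suc (Suc k)) (\<lambda>\<alpha>. Lm m i j (mulx i (mulx j R) \<alpha>)) Q)"
    unfolding xs_alt ip_sum_left ..
  also have "\<dots> = (\<Sum>i<m. \<Sum>j<m. ip m k R (\<lambda>\<alpha>. Lm m i j (pder i (pder j Q) \<alpha>)))"
  proof (intro sum.cong refl)
    fix i j assume ij: "i \<in> {..<m}" "j \<in> {..<m}"
    hence ij': "i < m" "j < m" by auto
    have "ip m (Suc (Suc k)) (\<lambda>\<alpha>. Lm m i j (mulx i (mulx j R) \<alpha>)) Q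
        = ip m (Suc (Suc k)) (mulx i (mulx j R)) (\<lambda>\<alpha>. Lm m i j (Q \<alpha>))"
      by (rule ip_Lm[OF ij'])
    also have "\<dots> = ip m k R (pder j (pder i (\<lambda>\<alpha>. Lm m i j (Q \<alpha>))))"
      by (simp add: ip_mulx[OF ij'(1)] ip_mulx[OF ij'(2)])
    also have "\<dots> = ip m k R (\<lambda>\<alpha>. Lm m i j (pder i (pder j Q) \<alpha>))"
      by (simp add: pder_Lm pder_comm[of j i])
    finally show "ip m (Suc (Suc k)) (\<lambda>\<alpha>. Lm m i j (mulx i (mulx j R) \<alpha>)) Q
        = ip m k R (\<lambda>\<alpha>. Lm m i j (pder i (pder j Q) \<alpha>))" .
  qed
  also have "\<dots> = ip m k R (dirac_sandwich m Q)"
    unfolding ds_alt ip_sum_right ..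
  finally show ?thesis .
qed

definition supp_in :: "nat \<Rightarrow> nat \<Rightarrow> cpoly \<Rightarrow> bool" where
  "supp_in m k P \<longleftrightarrow> (\<forall>\<alpha>. \<alpha> \<notin> monomials m k \<longrightarrow> P \<alpha> = 0)"

lemma hom_iff: "P \<in> hom_poly m k \<longleftrightarrow> supp_in m k P \<and> (\<forall>\<alpha>. cl_elem m (P \<alpha>))"
  unfolding hom_poly_def supp_in_def cl_zero_eq by blast

lemma cl_elem_add: "cl_elem m a \<Longrightarrow> cl_elem m b \<Longrightarrow> cl_elem m (a + b)"
  unfolding cl_elem_def by simp
lemma cl_elem_scale: "cl_elem m a \<Longrightarrow> cl_elem m (c *\<^sub>R a)"
  unfolding cl_elem_def by simp
lemma cl_elem_zero: "cl_elem m 0"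
  unfolding cl_elem_def by simp
lemma cl_elem_sum: "(\<And>i. i \<in> I \<Longrightarrow> cl_elem m (f i)) \<Longrightarrow> cl_elem m (\<Sum>i\<in>I. f i)"
  unfolding cl_elem_def sum_fun_apply by (simp add: sum.neutral)

lemma hom_add: "P \<in> hom_poly m k \<Longrightarrow> Q \<in> hom_poly m k \<Longrightarrow> P + Q \<in> hom_poly m k"
  unfolding hom_iff supp_in_def by (simp add: cl_elem_add)
lemma hom_scale: "P \<in> hom_poly m k \<Longrightarrow> c *\<^sub>R P \<in> hom_poly m k"
  unfolding hom_iff supp_in_def by (simp add: cl_elem_scale)
lemma hom_zero: "0 \<in> hom_poly m k"
  unfolding hom_iff supp_in_def by (simp add: cl_elem_zero)

lemma mulx_supp:
  assumes "supp_in m k R" "p < m"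
  shows "supp_in m (Suc k) (mulx p R)"
  unfolding supp_in_def
proof (intro allI impI)
  fix \<alpha> assume a: "\<alpha> \<notin> monomials m (Suc k)"
  show "mulx p R \<alpha> = 0"
  proof (cases "0 < \<alpha> p")
    case True
    let ?b = "\<alpha>(p := \<alpha> p - 1)"
    have "?b(p := ?b p + 1) = \<alpha>" using True by (simp add: fun_eq_iff)
    hence "?b \<notin> monomials m k" using mon_up[OF assms(2), of ?b k] a by auto
    thus ?thesis using True assms(1) unfolding mulx_def supp_in_def by simp
  next
    case False thus ?thesis unfolding mulx_def by (simp add: cl_zero_eq)
  qed
qed

lemma pder_supp:
  assumes "supp_in m (Suc k) P" "p < m"
  shows "supp_in m k (pder p P)"
  unfolding supp_in_def
proof (intro allI impI)
  fix \<beta> assume b: "\<beta> \<notin> monomials m k"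
  hence "\<beta>(p := \<beta> p + 1) \<notin> monomials m (Suc k)" using mon_down[OF assms(2)] by blast
  thus "pder p P \<beta> = 0" using assms(1) unfolding pder_def supp_in_def cl_scale_eq by simp
qed

lemma mulx_elem: "(\<forall>\<alpha>. cl_elem m (R \<alpha>)) \<Longrightarrow> cl_elem m (mulx p R \<alpha>)"
  unfolding mulx_def by (simp add: cl_zero_eq cl_elem_zero)

lemma xs_hom:
  assumes "R \<in> hom_poly m k"
  shows "x_sandwich m R \<in> hom_poly m (Suc (Suc k))"
  unfolding hom_iff
proof
  have sR: "supp_in m k R" using assms hom_iff by blast
  show "supp_in m (Suc (Suc k)) (x_sandwich m R)"
    unfolding supp_in_def xs_alt
  proof (intro allI impI)
    fix \<alpha> assume a: "\<alpha> \<notin> monomials m (Suc (Suc k))"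
    have "\<And>i j. i < m \<Longrightarrow> j < m \<Longrightarrow> mulx i (mulx j R) \<alpha> = 0"
      using mulx_supp[OF mulx_supp[OF sR]] a unfolding supp_in_def by blast
    thus "(\<Sum>i<m. \<Sum>j<m. Lm m i j (mulx i (mulx j R) \<alpha>)) = 0"
      by (simp add: Lm_zero)
  qed
  show "\<forall>\<alpha>. cl_elem m (x_sandwich m R \<alpha>)"
    unfolding xs_alt by (intro allI cl_elem_sum Lm_elem)
qed

lemma ds_hom:
  assumes "P \<in> hom_poly m (Suc (Suc k))"
  shows "dirac_sandwich m P \<in> hom_poly m k"
  unfolding hom_iff
proof
  have sP: "supp_in m (Suc (Suc k)) P" using assms hom_iff by blast
  show "supp_in m k (dirac_sandwich m P)"
    unfolding supp_in_def ds_alt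
  proof (intro allI impI)
    fix \<alpha> assume a: "\<alpha> \<notin> monomials m k"
    have "\<And>i j. i < m \<Longrightarrow> j < m \<Longrightarrow> pder i (pder j P) \<alpha> = 0"
      using pder_supp[OF pder_supp[OF sP]] a unfolding supp_in_def by blast
    thus "(\<Sum>i<m. \<Sum>j<m. Lm m i j (pder i (pder j P) \<alpha>)) = 0"
      by (simp add: Lm_zero)
  qed
  show "\<forall>\<alpha>. cl_elem m (dirac_sandwich m P \<alpha>)"
    unfolding ds_alt by (intro allI cl_elem_sum Lm_elem)
qed

lemma mulx_add: "mulx p (R + S) = mulx p R + mulx p S"
  by (simp add: mulx_def fun_eq_iff cl_zero_eq)
lemma mulx_scale: "mulx p (c *\<^sub>R R) = c *\<^sub>R mulx p R"
  by (simp add: mulx_def fun_eq_iff cl_zero_eq)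
lemma xs_add: "x_sandwich m (R + S) = x_sandwich m R + x_sandwich m S"
  unfolding xs_alt fun_eq_iff by (simp add: mulx_add Lm_add sum.distrib)
lemma xs_scale: "x_sandwich m (c *\<^sub>R R) = c *\<^sub>R x_sandwich m R"
  unfolding xs_alt fun_eq_iff by (simp add: mulx_scale Lm_scale scaleR_sum_right)
lemma xs_zero: "x_sandwich m 0 = 0"
  using xs_scale[of m 0 0] by simp
lemma pder_zero: "pder p 0 = 0"
  by (simp add: pder_def fun_eq_iff cl_scale_eq)
lemma ds_zero: "dirac_sandwich m 0 = 0"
  unfolding ds_alt by (simp add: pder_zero Lm_zero fun_eq_iff)

section \<open>Positivity and basis\<close>

lemma ip_pos:
  assumes P: "P \<in> hom_poly m k" and z: "ip m k P P = 0"
  shows "P = 0"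
proof -
  have nn: "\<And>\<alpha>. 0 \<le> mf m \<alpha> * tau m (P \<alpha>) (P \<alpha>)"
  proof -
    fix \<alpha>
    have "0 \<le> tau m (P \<alpha>) (P \<alpha>)" unfolding tau_def by (rule sum_nonneg) simp
    thus "0 \<le> mf m \<alpha> * tau m (P \<alpha>) (P \<alpha>)" by (intro mult_nonneg_nonneg less_imp_le[OF mf_pos])
  qed
  have each: "\<And>\<alpha>. \<alpha> \<in> monomials m k \<Longrightarrow> mf m \<alpha> * tau m (P \<alpha>) (P \<alpha>) = 0"
    using z sum_nonneg_eq_0_iff[OF finite_monomials, where f="\<lambda>\<alpha>. mf m \<alpha> * tau m (P \<alpha>) (P \<alpha>)"] nn
    unfolding ip_def by blast
  show ?thesis
  proof (rule ext, rule ext)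
    fix \<alpha> B
    show "P \<alpha> B = 0 \<alpha> B"
    proof (cases "\<alpha> \<in> monomials m k")
      case False thus ?thesis using P unfolding hom_iff supp_in_def by simp
    next
      case True
      have "tau m (P \<alpha>) (P \<alpha>) = 0" using each[OF True] mf_pos[of m \<alpha>] by simp
      hence "\<forall>A\<in>Pow {..<m}. P \<alpha> A * P \<alpha> A = 0"
        unfolding tau_def by (subst (asm) sum_nonneg_eq_0_iff) auto
      moreover have "cl_elem m (P \<alpha>)" using P unfolding hom_iff by blast
      ultimately show ?thesis unfolding cl_elem_def by (cases "B \<subseteq> {..<m}") auto
    qed
  qed
qed

definition Eb :: "(nat \<Rightarrow> nat) \<Rightarrow> nat set \<Rightarrow> cpoly" where
  "Eb \<beta> A = (\<lambda>\<alpha> B. if \<alpha> = \<beta> \<and> B = A then 1 else 0)"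

lemma Eb_hom: "\<beta> \<in> monomials m k \<Longrightarrow> A \<in> Pow {..<m} \<Longrightarrow> Eb \<beta> A \<in> hom_poly m k"
  unfolding hom_iff supp_in_def cl_elem_def Eb_def by auto

lemma ip_Eb:
  assumes b: "\<beta> \<in> monomials m k" and A: "A \<in> Pow {..<m}"
  shows "ip m k (Eb \<beta> A) Y = mf m \<beta> * Y \<beta> A"
proof -
  have fP: "finite (Pow {..<m})" by simp
  have t: "\<And>\<alpha>. tau m (Eb \<beta> A \<alpha>) (Y \<alpha>) = (if \<alpha> = \<beta> then Y \<beta> A else 0)"
  proof -
    fix \<alpha>
    have "tau m (Eb \<beta> A \<alpha>) (Y \<alpha>) = (\<Sum>B\<in>Pow {..<m}. if B = A then (if \<alpha> = \<beta> then Y \<alpha> B else 0) else 0)"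
      unfolding tau_def Eb_def by (rule sum.cong) auto
    also have "\<dots> = (if \<alpha> = \<beta> then Y \<beta> A else 0)"
      using A by (simp add: sum.delta[OF fP] del: Pow_iff)
    finally show "?thesis \<alpha>" .
  qed
  have "ip m k (Eb \<beta> A) Y = (\<Sum>\<alpha>\<in>monomials m k. if \<alpha> = \<beta> then mf m \<beta> * Y \<beta> A else 0)"
    unfolding ip_def t by (rule sum.cong) auto
  also have "\<dots> = mf m \<beta> * Y \<beta> A"
    using b by (simp add: sum.delta[OF finite_monomials])
  finally show ?thesis .
qed

section \<open>Gram-Schmidt\<close>

lemma gram_schmidt:
  fixes ipf :: "'a::real_vector \<Rightarrow> 'a \<Rightarrow> real" and V :: "'a set"
  assumes add: "\<And>x y z. ipf (x + y) z = ipf x z + ipf y z"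
    and scl: "\<And>c x z. ipf (c *\<^sub>R x) z = c * ipf x z"
    and sym: "\<And>x y. ipf x y = ipf y x"
    and Vadd: "\<And>x y. x \<in> V \<Longrightarrow> y \<in> V \<Longrightarrow> x + y \<in> V"
    and Vscl: "\<And>c x. x \<in> V \<Longrightarrow> c *\<^sub>R x \<in> V"
    and pos: "\<And>x. x \<in> V \<Longrightarrow> ipf x x = 0 \<Longrightarrow> x = 0"
  shows "finite S \<Longrightarrow> S \<subseteq> V \<Longrightarrow> v \<in> V \<Longrightarrow>
    \<exists>u c. u \<in> V \<and> v = u + (\<Sum>s\<in>S. c s *\<^sub>R s) \<and> (\<forall>s\<in>S. ipf u s = 0)"
proof (induction S arbitrary: v rule: finite_induct)
  case empty thus ?case by auto
next
  case (insert w S)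
  have zero: "\<And>x. ipf 0 x = 0" using scl[of 0 0] by simp
  have sumL: "\<And>x f. ipf (\<Sum>s\<in>S. f s *\<^sub>R s) x = (\<Sum>s\<in>S. f s * ipf s x)"
  proof -
    fix x f
    show "ipf (\<Sum>s\<in>S. f s *\<^sub>R s) x = (\<Sum>s\<in>S. f s * ipf s x)"
      using insert.hyps(1) by (induction S rule: finite_induct) (simp_all add: zero add scl)
  qed
  have addR: "\<And>x y z. ipf z (x + y) = ipf z x + ipf z y"
  proof -
    fix x y z
    have "ipf z (x + y) = ipf (x + y) z" by (rule sym)
    also have "\<dots> = ipf x z + ipf y z" by (rule add)
    also have "\<dots> = ipf z x + ipf z y" by (simp only: sym[of x z] sym[of y z])
    finally show "ipf z (x + y) = ipf z x + ipf z y" .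
  qed
  have sumR: "\<And>x f. ipf x (\<Sum>s\<in>S. f s *\<^sub>R s) = (\<Sum>s\<in>S. f s * ipf x s)"
  proof -
    fix x f
    have "ipf x (\<Sum>s\<in>S. f s *\<^sub>R s) = (\<Sum>s\<in>S. f s * ipf s x)" by (simp only: sym[of x] sumL)
    also have "\<dots> = (\<Sum>s\<in>S. f s * ipf x s)" by (intro sum.cong refl) (simp only: sym[of _ x])
    finally show "ipf x (\<Sum>s\<in>S. f s *\<^sub>R s) = (\<Sum>s\<in>S. f s * ipf x s)" .
  qed
  have SV: "S \<subseteq> V" and wV: "w \<in> V" using insert.prems by auto
  obtain u c where u: "u \<in> V" "v = u + (\<Sum>s\<in>S. c s *\<^sub>R s)" "\<forall>s\<in>S. ipf u s = 0"
    using insert.IH[OF SV insert.prems(2)] by blast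
  obtain u' d where u': "u' \<in> V" "w = u' + (\<Sum>s\<in>S. d s *\<^sub>R s)" "\<forall>s\<in>S. ipf u' s = 0"
    using insert.IH[OF SV wV] by blast
  show ?case
  proof (cases "ipf u' u' = 0")
    case True
    hence "u' = 0" using pos u'(1) by blast
    hence w: "w = (\<Sum>s\<in>S. d s *\<^sub>R s)" using u'(2) by simp
    have uw: "ipf u w = 0" unfolding w sumR using u(3) by simp
    let ?c = "c(w := 0)"
    have "(\<Sum>s\<in>insert w S. ?c s *\<^sub>R s) = (\<Sum>s\<in>S. c s *\<^sub>R s)"
      using insert.hyps by (simp add: sum.insert, intro sum.cong) auto
    thus ?thesis using u uw by (intro exI[of _ u] exI[of _ ?c]) auto
  next
    case False
    define t where "t = ipf u u' / ipf u' u'"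
    define u'' where "u'' = u + (- t) *\<^sub>R u'"
    have u''V: "u'' \<in> V" unfolding u''_def using u(1) u'(1) Vadd Vscl by blast
    have ipu'': "\<And>s. ipf u'' s = ipf u s - t * ipf u' s" unfolding u''_def by (simp only: add scl)
    have o1: "\<forall>s\<in>S. ipf u'' s = 0" using u(3) u'(3) ipu'' by simp
    have o2: "ipf u'' u' = 0" unfolding ipu'' t_def using False by simp
    have o3: "ipf u'' w = 0"
      unfolding u'(2) addR sumR using o1 o2 by simp
    define c' where "c' = (\<lambda>s. if s = w then t else c s - t * d s)"
    have "(\<Sum>s\<in>insert w S. c' s *\<^sub>R s) = t *\<^sub>R w + (\<Sum>s\<in>S. (c s - t * d s) *\<^sub>R s)"
      using insert.hyps by (simp add: sum.insert c'_def, intro sum.cong) auto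
    also have "\<dots> = t *\<^sub>R w + (\<Sum>s\<in>S. c s *\<^sub>R s) - t *\<^sub>R (\<Sum>s\<in>S. d s *\<^sub>R s)"
      by (simp add: scaleR_diff_left sum_subtractf scaleR_sum_right)
    finally have cs: "(\<Sum>s\<in>insert w S. c' s *\<^sub>R s) = t *\<^sub>R w + (\<Sum>s\<in>S. c s *\<^sub>R s) - t *\<^sub>R (\<Sum>s\<in>S. d s *\<^sub>R s)" .
    have e1: "v = u'' + (t *\<^sub>R w + (\<Sum>s\<in>S. c s *\<^sub>R s) - t *\<^sub>R (\<Sum>s\<in>S. d s *\<^sub>R s))"
      using u(2) u'(2) unfolding u''_def by (simp add: algebra_simps)
    have "v = u'' + (\<Sum>s\<in>insert w S. c' s *\<^sub>R s)"
      unfolding cs by (rule e1)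
    moreover have "\<forall>s\<in>insert w S. ipf u'' s = 0" using o1 o3 by simp
    ultimately show ?thesis using u''V by blast
  qed
qed

lemma xPx_closed:
  shows "0 \<in> xPx m k"
    and "P \<in> xPx m k \<Longrightarrow> Q \<in> xPx m k \<Longrightarrow> P + Q \<in> xPx m k"
    and "P \<in> xPx m k \<Longrightarrow> c *\<^sub>R P \<in> xPx m k"
proof -
  show "0 \<in> xPx m k" unfolding xPx_def using hom_zero[of m "k - 2"] xs_zero[of m]
    by (intro image_eqI[where x=0]) auto
  show "P \<in> xPx m k \<Longrightarrow> Q \<in> xPx m k \<Longrightarrow> P + Q \<in> xPx m k"
  proof -
    assume "P \<in> xPx m k" "Q \<in> xPx m k"
    then obtain R T where "P = x_sandwich m R" "R \<in> hom_poly m (k - 2)" "Q = x_sandwich m T" "T \<in> hom_poly m (k - 2)"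
      unfolding xPx_def by blast
    thus "P + Q \<in> xPx m k" unfolding xPx_def
      by (intro image_eqI[where x="R + T"]) (simp_all add: xs_add hom_add)
  qed
  show "P \<in> xPx m k \<Longrightarrow> c *\<^sub>R P \<in> xPx m k"
  proof -
    assume "P \<in> xPx m k"
    then obtain R where "P = x_sandwich m R" "R \<in> hom_poly m (k - 2)"
      unfolding xPx_def by blast
    thus "c *\<^sub>R P \<in> xPx m k" unfolding xPx_def
      by (intro image_eqI[where x="c *\<^sub>R R"]) (simp_all add: xs_scale hom_scale)
  qed
qed

lemma xPx_sum: "finite S \<Longrightarrow> S \<subseteq> xPx m k \<Longrightarrow> (\<Sum>s\<in>S. c s *\<^sub>R s) \<in> xPx m k"
  by (induction S rule: finite_induct) (simp_all add: xPx_closed)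

theorem mainTheorem13:
  fixes m k :: nat
  assumes "2 \<le> k"
  shows "hom_poly m k = {padd P Q | P Q. P \<in> infra m k \<and> Q \<in> xPx m k}
     \<and> infra m k \<inter> xPx m k = {pzero}
     \<and> (\<forall>P\<in>infra m k. \<forall>Q\<in>xPx m k. fischer m k P Q = 0)
     \<and> infra m k = {P \<in> hom_poly m k. \<forall>Q\<in>xPx m k. fischer m k Q P = 0}"
proof -
  obtain k' where kk: "k = Suc (Suc k')" using assms by (metis add_2_eq_Suc le_Suc_ex)
  have k2: "k - 2 = k'" unfolding kk by simp
  have X: "xPx m k = x_sandwich m ` hom_poly m k'" unfolding xPx_def k2 ..
  have adj: "\<And>R Q. ip m k (x_sandwich m R) Q = ip m k' R (dirac_sandwich m Q)"
    unfolding kk by (rule ip_adjoint)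
  have I: "infra m k = {P \<in> hom_poly m k. dirac_sandwich m P = 0}"
    unfolding infra_def pzero_eq ..
  have orth: "\<And>P Q. P \<in> infra m k \<Longrightarrow> Q \<in> xPx m k \<Longrightarrow> ip m k Q P = 0"
  proof -
    fix P Q assume P: "P \<in> infra m k" and Q: "Q \<in> xPx m k"
    obtain R where R: "Q = x_sandwich m R" using Q X by blast
    show "ip m k Q P = 0" using P unfolding R adj I by (simp add: ip_zero_right)
  qed
  have c2: "infra m k \<inter> xPx m k = {pzero}"
  proof
    show "infra m k \<inter> xPx m k \<subseteq> {pzero}"
    proof
      fix P assume P: "P \<in> infra m k \<inter> xPx m k"
      hence "ip m k P P = 0" using orth by blast
      moreover have "P \<in> hom_poly m k" using P I by blast
      ultimately show "P \<in> {pzero}" using ip_pos pzero_eq by auto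
    qed
    have "pzero \<in> infra m k" unfolding I pzero_eq using hom_zero ds_zero by blast
    moreover have "pzero \<in> xPx m k" unfolding pzero_eq by (rule xPx_closed(1))
    ultimately show "{pzero} \<subseteq> infra m k \<inter> xPx m k" by blast
  qed
  have c3: "\<forall>P\<in>infra m k. \<forall>Q\<in>xPx m k. fischer m k P Q = 0"
  proof (intro ballI)
    fix P Q assume "P \<in> infra m k" "Q \<in> xPx m k"
    hence "ip m k Q P = 0" by (rule orth)
    thus "fischer m k P Q = 0" unfolding fischer_ip by (simp only: ip_sym[of m k P Q])
  qed
  have c4: "infra m k = {P \<in> hom_poly m k. \<forall>Q\<in>xPx m k. fischer m k Q P = 0}"
  proof
    show "infra m k \<subseteq> {P \<in> hom_poly m k. \<forall>Q\<in>xPx m k. fischer m k Q P = 0}"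
      using orth I by (auto simp: fischer_ip)
    show "{P \<in> hom_poly m k. \<forall>Q\<in>xPx m k. fischer m k Q P = 0} \<subseteq> infra m k"
    proof
      fix P assume P: "P \<in> {P \<in> hom_poly m k. \<forall>Q\<in>xPx m k. fischer m k Q P = 0}"
      hence Ph: "P \<in> hom_poly m k" by blast
      let ?R = "dirac_sandwich m P"
      have Rh: "?R \<in> hom_poly m k'" using ds_hom Ph unfolding kk by blast
      hence "x_sandwich m ?R \<in> xPx m k" unfolding X by blast
      hence "ip m k (x_sandwich m ?R) P = 0" using P by (simp add: fischer_ip)
      hence "ip m k' ?R ?R = 0" unfolding adj .
      hence "?R = 0" using ip_pos Rh by blast
      thus "P \<in> infra m k" unfolding I using Ph by blast
    qed
  qed
  have c1: "hom_poly m k = {padd P Q | P Q. P \<in> infra m k \<and> Q \<in> xPx m k}"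
  proof
    show "{padd P Q | P Q. P \<in> infra m k \<and> Q \<in> xPx m k} \<subseteq> hom_poly m k"
    proof
      fix Z assume "Z \<in> {padd P Q | P Q. P \<in> infra m k \<and> Q \<in> xPx m k}"
      then obtain P Q where Z: "Z = P + Q" and P: "P \<in> infra m k" and Q: "Q \<in> xPx m k"
        unfolding padd_eq by blast
      obtain R where R: "Q = x_sandwich m R" "R \<in> hom_poly m k'" using Q X by blast
      have "Q \<in> hom_poly m k" unfolding R kk by (rule xs_hom[OF R(2)])
      moreover have "P \<in> hom_poly m k" using P I by blast
      ultimately show "Z \<in> hom_poly m k" unfolding Z by (rule hom_add[rotated])
    qed
    show "hom_poly m k \<subseteq> {padd P Q | P Q. P \<in> infra m k \<and> Q \<in> xPx m k}"
    proof
      fix P assume Ph: "P \<in> hom_poly m k"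
      define B where "B = (\<lambda>(\<beta>, A). Eb \<beta> A) ` (monomials m k' \<times> Pow {..<m})"
      define S where "S = x_sandwich m ` B"
      have Bh: "B \<subseteq> hom_poly m k'" unfolding B_def using Eb_hom by auto
      have fS: "finite S" unfolding S_def B_def using finite_monomials by simp
      have SX: "S \<subseteq> xPx m k" unfolding S_def X using Bh by blast
      have SV: "S \<subseteq> hom_poly m k" unfolding S_def using Bh xs_hom unfolding kk by blast
      have a1: "\<And>x y. x \<in> hom_poly m k \<Longrightarrow> y \<in> hom_poly m k \<Longrightarrow> x + y \<in> hom_poly m k"
        by (rule hom_add)
      have a2: "\<And>c x. x \<in> hom_poly m k \<Longrightarrow> c *\<^sub>R x \<in> hom_poly m k" by (rule hom_scale)
      have a3: "\<And>x. x \<in> hom_poly m k \<Longrightarrow> ip m k x x = 0 \<Longrightarrow> x = 0" by (rule ip_pos)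
      obtain u c where u: "u \<in> hom_poly m k" "P = u + (\<Sum>s\<in>S. c s *\<^sub>R s)" "\<forall>s\<in>S. ip m k u s = 0"
        using gram_schmidt[where ipf="ip m k" and V="hom_poly m k", OF ip_add_left ip_scale_left ip_sym
            a1 a2 a3 fS SV Ph] by blast
      let ?D = "dirac_sandwich m u"
      have Dh: "?D \<in> hom_poly m k'" using ds_hom u(1) unfolding kk by blast
      have Dz: "?D = 0"
      proof (rule ext, rule ext)
        fix \<beta> A
        show "?D \<beta> A = 0 \<beta> A"
        proof (cases "\<beta> \<in> monomials m k' \<and> A \<in> Pow {..<m}")
          case True
          hence "Eb \<beta> A \<in> B" unfolding B_def by (intro image_eqI[where x="(\<beta>, A)"]) auto
          hence "x_sandwich m (Eb \<beta> A) \<in> S" unfolding S_def by (rule imageI)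
          hence "ip m k u (x_sandwich m (Eb \<beta> A)) = 0" using u(3) by blast
          hence "ip m k' (Eb \<beta> A) ?D = 0" unfolding ip_sym[of m k u] adj .
          hence "mf m \<beta> * ?D \<beta> A = 0" using ip_Eb True by simp
          thus ?thesis using mf_pos[of m \<beta>] by simp
        next
          case False
          thus ?thesis using Dh unfolding hom_iff supp_in_def cl_elem_def by auto
        qed
      qed
      have "u \<in> infra m k" unfolding I using u(1) Dz by blast
      moreover have "(\<Sum>s\<in>S. c s *\<^sub>R s) \<in> xPx m k" by (rule xPx_sum[OF fS SX])
      ultimately show "P \<in> {padd P Q | P Q. P \<in> infra m k \<and> Q \<in> xPx m k}"
        unfolding padd_eq u(2) by blast
    qed
  qed
  show ?thesis using c1 c2 c3 c4 by blast
qed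

end
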